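(* For a non-negative integer $n$ and real $x>0$ small, define $$A_n(x)=2\ln(n!\,x)+\ln|\Gamma(-n-x)|+\ln|\Gamma(-n+x)|-x^2\sum_{k=1}^n\frac1{k^2}.$$ Then for every non-negative integer $n$, $$\lim_{x\to0^+}\frac{1}{x^2}\ln\!\left(\frac{A_n(x)}{A_{n+1}(x)}\right)=-\frac{1}{2(n+1)^4\zeta(2)}.$$
   Context: $\Gamma$ is Euler's Gamma function on the real line and $\zeta$ is the Riemann zeta function. *)

theory Defs
  imports "HOL-Analysis.Analysis"
begin

definition zeta_real :: "real \<Rightarrow> real" where
  "zeta_real s = (\<Sum>m. 1 / (real (Suc m)) powr s)"

definition A :: "nat \<Rightarrow> real \<Rightarrow> real" where
  "A n x = 2 * ln (fact n * x) + ln \<bar>Gamma (- real n - x)\<bar> + ln \<bar>Gamma (- real n + x)\<bar>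
           - x\<^sup>2 * (\<Sum>k=1..n. 1 / (real k)\<^sup>2)"

end

theory Submission
  imports Defs "HOL-Real_Asymp.Real_Asymp"
begin

lemma Gamma_rec: "Gamma (z::real) = Gamma (z+1) / z"
proof -
  have "rGamma z = z * rGamma (z+1)" using rGamma_plus1[of z] by simp
  then show ?thesis by (simp add: Gamma_def divide_inverse mult.commute)
qed

lemma not_int_aux:
  fixes x :: real and m :: nat
  assumes "0 < x" "x < 1"
  shows "- real m - x \<notin> \<int>" "- real m + x \<notin> \<int>"
proof -
  have nx: "x \<notin> \<int>"
  proof
    assume "x \<in> \<int>" then obtain k where "x = of_int k" by (auto elim: Ints_cases)
    with assms show False by auto
  qed
  show "- real m - x \<notin> \<int>"
  proof
    assume h: "- real m - x \<in> \<int>"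
    have "x = - (- real m - x) - real m" by simp
    also have "\<dots> \<in> \<int>" using h by (intro Ints_diff Ints_minus) auto
    finally show False using nx by simp
  qed
  show "- real m + x \<notin> \<int>"
  proof
    assume h: "- real m + x \<in> \<int>"
    have "x = (- real m + x) + real m" by simp
    also have "\<dots> \<in> \<int>" using h by (intro Ints_add) auto
    finally show False using nx by simp
  qed
qed

lemma Gamma_nz_aux:
  fixes x :: real and m :: nat
  assumes "0 < x" "x < 1"
  shows "Gamma (- real m - x) \<noteq> 0" "Gamma (- real m + x) \<noteq> 0"
  using not_int_aux[OF assms, of m] nonpos_Ints_subset_Ints by (auto simp: Gamma_eq_zero_iff)

lemma A_diff:
  fixes x :: real
  assumes x: "0 < x" "x < 1"
  shows "A n x - A (Suc n) x = ln (1 - x\<^sup>2/(real n+1)\<^sup>2) + x\<^sup>2/(real n+1)\<^sup>2"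
proof -
  define c where "c = real n + 1"
  have c: "c \<ge> 1" unfolding c_def by simp
  have e1: "- real (Suc n) - x + 1 = - real n - x" "- real (Suc n) - x = - c - x"
    "- real (Suc n) + x + 1 = - real n + x" "- real (Suc n) + x = - c + x"
    by (simp_all add: c_def)
  have g1: "Gamma (- real (Suc n) - x) = Gamma (- real n - x) / (- real (Suc n) - x)"
    using Gamma_rec[of "- real (Suc n) - x"] unfolding e1(1) .
  have g2: "Gamma (- real (Suc n) + x) = Gamma (- real n + x) / (- real (Suc n) + x)"
    using Gamma_rec[of "- real (Suc n) + x"] unfolding e1(3) .
  have p1: "\<bar>Gamma (- real n - x)\<bar> > 0" "\<bar>Gamma (- real n + x)\<bar> > 0"
    using Gamma_nz_aux[OF x, of n] by auto
  have cx1: "c + x > 0" "c - x > 0" using c x by auto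
  have b1: "\<bar>- real (Suc n) - x\<bar> = c + x" "\<bar>- real (Suc n) + x\<bar> = c - x"
    using cx1 by (simp_all add: c_def)
  have a1: "\<bar>Gamma (- real (Suc n) - x)\<bar> = \<bar>Gamma (- real n - x)\<bar> / (c + x)"
    by (simp only: g1 abs_divide b1)
  have a2: "\<bar>Gamma (- real (Suc n) + x)\<bar> = \<bar>Gamma (- real n + x)\<bar> / (c - x)"
    by (simp only: g2 abs_divide b1)
  have l1: "ln \<bar>Gamma (- real (Suc n) - x)\<bar> = ln \<bar>Gamma (- real n - x)\<bar> - ln (c + x)"
    using a1 p1 cx1 by (simp add: ln_div)
  have l2: "ln \<bar>Gamma (- real (Suc n) + x)\<bar> = ln \<bar>Gamma (- real n + x)\<bar> - ln (c - x)"
    using a2 p1 cx1 by (simp add: ln_div)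
  have fpos: "fact n * x > 0" using x by simp
  have l3: "ln (fact (Suc n) * x) = ln c + ln (fact n * x)"
  proof -
    have "fact (Suc n) * x = c * (fact n * x)" by (simp add: c_def algebra_simps)
    then have "ln (fact (Suc n) * x) = ln (c * (fact n * x))" by (rule arg_cong)
    also have "\<dots> = ln c + ln (fact n * x)" by (rule ln_mult_pos) (use c fpos in auto)
    finally show ?thesis .
  qed
  have s: "(\<Sum>k=1..Suc n. 1 / (real k)\<^sup>2) = (\<Sum>k=1..n. 1 / (real k)\<^sup>2) + 1 / c\<^sup>2"
    by (simp add: c_def)
  have l4: "ln (1 - x\<^sup>2/c\<^sup>2) = ln (c + x) + ln (c - x) - 2 * ln c"
  proof -
    have "1 - x\<^sup>2/c\<^sup>2 = ((c + x) * (c - x)) / c\<^sup>2" using c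
      by (simp add: field_simps power2_eq_square)
    then have "ln (1 - x\<^sup>2/c\<^sup>2) = ln ((c + x) * (c - x)) - ln (c\<^sup>2)"
      using cx1 c by (simp add: ln_div)
    also have "\<dots> = ln (c + x) + ln (c - x) - 2 * ln c"
      using cx1 c by (simp add: ln_mult ln_realpow)
    finally show ?thesis .
  qed
  have "A n x - A (Suc n) x = ln (1 - x\<^sup>2/c\<^sup>2) + x\<^sup>2/c\<^sup>2"
    unfolding A_def l1 l2 l3 s l4 by (simp add: algebra_simps)
  then show ?thesis by (simp add: c_def)
qed

lemma Gamma_reflection_real:
  fixes x :: real
  shows "Gamma x * Gamma (- x) = - pi / (x * sin (pi * x))"
proof -
  have "Gamma (complex_of_real x) * Gamma (- complex_of_real x) =
        - of_real pi / (of_real x * sin (of_real pi * of_real x))"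
    by (rule Gamma_reflection_complex')
  also have "Gamma (- complex_of_real x) = of_real (Gamma (- x))"
    by (metis Gamma_complex_of_real of_real_minus)
  also have "sin (complex_of_real pi * complex_of_real x) = of_real (sin (pi * x))"
    by (metis of_real_mult sin_of_real)
  finally have "complex_of_real (Gamma x * Gamma (- x)) = complex_of_real (- pi / (x * sin (pi * x)))"
    by (simp add: Gamma_complex_of_real)
  then show ?thesis using of_real_eq_iff by blast
qed

lemma A0:
  fixes x :: real
  assumes x: "0 < x" "x < 1"
  shows "A 0 x = ln (pi * x / sin (pi * x))"
proof -
  have sp: "sin (pi * x) > 0" using x by (intro sin_gt_zero) auto
  have nz: "Gamma x \<noteq> 0" "Gamma (-x) \<noteq> 0"
    using Gamma_nz_aux[OF x, of 0] by auto
  have pr: "\<bar>Gamma (-x)\<bar> * \<bar>Gamma x\<bar> = pi / (x * sin (pi * x))"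
  proof -
    have "\<bar>Gamma (-x)\<bar> * \<bar>Gamma x\<bar> = \<bar>Gamma x * Gamma (-x)\<bar>"
      by (simp only: abs_mult mult.commute)
    also have "\<dots> = \<bar>- pi / (x * sin (pi * x))\<bar>" by (simp only: Gamma_reflection_real)
    also have "\<dots> = pi / (x * sin (pi * x))" using x sp by simp
    finally show ?thesis .
  qed
  have "A 0 x = 2 * ln x + ln (\<bar>Gamma (-x)\<bar> * \<bar>Gamma x\<bar>)"
    unfolding A_def using nz by (simp add: ln_mult)
  also have "\<dots> = 2 * ln x + ln (pi / (x * sin (pi * x)))" by (simp add: pr)
  also have "\<dots> = ln (x\<^sup>2 * (pi / (x * sin (pi * x))))"
  proof -
    have "ln (x\<^sup>2 * (pi / (x * sin (pi * x)))) = ln (x\<^sup>2) + ln (pi / (x * sin (pi * x)))"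
      by (rule ln_mult_pos) (use x sp in auto)
    then show ?thesis using x by (simp add: ln_realpow)
  qed
  also have "x\<^sup>2 * (pi / (x * sin (pi * x))) = pi * x / sin (pi * x)"
    using x sp by (simp add: field_simps power2_eq_square)
  finally show ?thesis .
qed

lemma ev01: "eventually (\<lambda>x::real. 0 < x \<and> x < 1) (at_right 0)"
  unfolding eventually_at_right_field by (intro exI[of _ 1]) auto

lemma tr:
  assumes "(f \<longlongrightarrow> l) F" "eventually (\<lambda>x. f x = g x) F" "l = l'"
  shows "(g \<longlongrightarrow> l') F"
  using tendsto_cong[OF assms(2)] assms(1) assms(3) by simp

lemma trE:
  assumes "(f \<longlongrightarrow> l) F" "eventually P F" "\<And>x. P x \<Longrightarrow> f x = g x" "l = l'"
  shows "(g \<longlongrightarrow> l') F"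
  by (rule tr[OF assms(1) eventually_mono[OF assms(2) assms(3)] assms(4)])

lemma h_lim: "((\<lambda>t::real. (ln (1 - t\<^sup>2) + t\<^sup>2)/t^4) \<longlongrightarrow> -1/2) (at_right 0)"
  by real_asymp

lemma alg4: "(c::real) \<noteq> 0 \<Longrightarrow> x \<noteq> 0 \<Longrightarrow> (L + y) / (x^4/c^4) / c^4 = (L + y) / x^4"
  by (simp add: field_simps)

lemma d_lim:
  fixes c :: real assumes c: "c > 0"
  shows "((\<lambda>x::real. (ln (1 - x\<^sup>2/c\<^sup>2) + x\<^sup>2/c\<^sup>2)/x^4) \<longlongrightarrow> -1/(2*c^4)) (at_right 0)"
proof -
  have "((\<lambda>x. x / c) \<longlongrightarrow> 0 / c) (at_right (0::real))"
    using c by (intro tendsto_intros) auto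
  then have "((\<lambda>x. x / c) \<longlongrightarrow> 0) (at_right (0::real))" by simp
  moreover have "eventually (\<lambda>x. x / c > 0) (at_right (0::real))"
    using eventually_at_right_less[of 0] proof eventually_elim
    qed (use c in auto)
  ultimately have "filterlim (\<lambda>x. x / c) (at_right 0) (at_right (0::real))"
    by (rule tendsto_imp_filterlim_at_right)
  from filterlim_compose[OF h_lim this]
  have "((\<lambda>x. (ln (1 - (x/c)\<^sup>2) + (x/c)\<^sup>2)/(x/c)^4) \<longlongrightarrow> -1/2) (at_right 0)" .
  then have "((\<lambda>x. (ln (1 - (x/c)\<^sup>2) + (x/c)\<^sup>2)/(x/c)^4 / c^4) \<longlongrightarrow> -1/2 / c^4) (at_right 0)"
    by (rule tendsto_divide[OF _ tendsto_const]) (use c in simp_all)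
  then show ?thesis
  proof (rule trE[OF _ eventually_at_right_less[of 0]])
    fix x :: real assume "0 < x"
    have e: "(x/c)\<^sup>2 = x\<^sup>2/c\<^sup>2" "(x/c)^4 = x^4/c^4" by (simp_all only: power_divide)
    show "(ln (1 - (x/c)\<^sup>2) + (x/c)\<^sup>2)/(x/c)^4 / c^4 = (ln (1 - x\<^sup>2/c\<^sup>2) + x\<^sup>2/c\<^sup>2)/x^4"
      unfolding e by (rule alg4) (use c \<open>0 < x\<close> in auto)
  qed simp
qed

lemma A0_lim: "((\<lambda>x::real. ln (pi*x/sin(pi*x))/x\<^sup>2) \<longlongrightarrow> pi^2/6) (at_right 0)"
proof -
  have *: "pi^2/6 = pi * (inverse pi * (inverse pi * (pi * (pi * pi)))) / 6"
    by (simp add: field_simps power2_eq_square)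
  show ?thesis unfolding * by real_asymp
qed

lemma log_lim: "((\<lambda>u::real. ln (1+u)/u) \<longlongrightarrow> 1) (at 0)"
  by real_asymp

lemma d_lim2:
  "((\<lambda>x. (A n x - A (Suc n) x) / x^4) \<longlongrightarrow> -1/(2*(real n+1)^4)) (at_right 0)"
proof -
  have "((\<lambda>x::real. (ln (1 - x\<^sup>2/(real n+1)\<^sup>2) + x\<^sup>2/(real n+1)\<^sup>2)/x^4) \<longlongrightarrow> -1/(2*(real n+1)^4)) (at_right 0)"
    by (rule d_lim) simp
  then show ?thesis
    by (rule trE[OF _ ev01]) (auto simp: A_diff)
qed

lemma A_lim: "((\<lambda>x. A m x / x\<^sup>2) \<longlongrightarrow> pi^2/6) (at_right 0)"
proof (induction m)
  case 0
  show ?case using A0_lim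
    by (rule trE[OF _ ev01]) (auto simp: A0)
next
  case (Suc n)
  have "((\<lambda>x::real. (A n x - A (Suc n) x) / x^4 * x\<^sup>2) \<longlongrightarrow> -1/(2*(real n+1)^4) * 0\<^sup>2) (at_right 0)"
    by (intro tendsto_intros d_lim2)
  then have d: "((\<lambda>x::real. (A n x - A (Suc n) x) / x\<^sup>2) \<longlongrightarrow> 0) (at_right 0)"
    by (rule trE[OF _ ev01]) (auto simp: power2_eq_square eval_nat_numeral)
  have "((\<lambda>x. A n x / x\<^sup>2 - (A n x - A (Suc n) x) / x\<^sup>2) \<longlongrightarrow> pi^2/6 - 0) (at_right 0)"
    by (intro tendsto_intros Suc d)
  then show ?case
    by (rule trE[OF _ ev01]) (auto simp: diff_divide_distrib[symmetric])
qed

lemma zeta2: "zeta_real 2 = pi^2/6"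
proof -
  have "(\<lambda>m. 1 / (real (Suc m)) powr 2) = (\<lambda>m. 1 / (real m + 1)\<^sup>2)"
    by (simp add: add.commute)
  then have "(\<lambda>m. 1 / (real (Suc m)) powr 2) sums (pi^2/6)"
    using inverse_squares_sums by simp
  then show ?thesis unfolding zeta_real_def by (rule sums_unique[symmetric])
qed

lemma alg1: "(x::real) \<noteq> 0 \<Longrightarrow> b \<noteq> 0 \<Longrightarrow> gg * (d/b) / x\<^sup>2 = gg * (d / x^4) / (b / x\<^sup>2)"
  by (simp add: field_simps eval_nat_numeral power2_eq_square)
lemma alg2: "(x::real) \<noteq> 0 \<Longrightarrow> b \<noteq> 0 \<Longrightarrow> d / x^4 * x\<^sup>2 / (b / x\<^sup>2) = d / b"
  by (simp add: field_simps eval_nat_numeral power2_eq_square)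
lemma alg3: "(b::real) \<noteq> 0 \<Longrightarrow> (b + d) / b = 1 + d / b"
  by (simp add: field_simps)

theorem mainTheorem6:
  fixes n :: nat
  shows "((\<lambda>x::real. ln (A n x / A (Suc n) x) / x\<^sup>2) \<longlongrightarrow>
           - 1 / (2 * (real n + 1) ^ 4 * zeta_real 2)) (at_right 0)"
proof -
  define B where "B x = A (Suc n) x" for x
  define D where "D x = A n x - A (Suc n) x" for x
  define u where "u x = D x / B x" for x
  define g where "g v = (if v = 0 then 1 else ln (1 + v) / v)" for v :: real
  have lB: "((\<lambda>x. B x / x\<^sup>2) \<longlongrightarrow> pi^2/6) (at_right 0)"
    unfolding B_def by (rule A_lim)
  have lD: "((\<lambda>x. D x / x^4) \<longlongrightarrow> -1/(2*(real n+1)^4)) (at_right 0)"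
    unfolding D_def by (rule d_lim2)
  have "eventually (\<lambda>x. B x / x\<^sup>2 > 0) (at_right 0)"
    using lB by (rule order_tendstoD) simp
  then have evB: "eventually (\<lambda>x. 0 < x \<and> x < 1 \<and> B x \<noteq> 0) (at_right 0)"
    using ev01 by eventually_elim auto
  have "((\<lambda>x. D x / x^4 * x\<^sup>2 / (B x / x\<^sup>2)) \<longlongrightarrow> -1/(2*(real n+1)^4) * 0\<^sup>2 / (pi^2/6)) (at_right 0)"
    by (intro tendsto_intros lD lB) simp
  then have lu: "(u \<longlongrightarrow> 0) (at_right 0)"
  proof (rule trE[OF _ evB])
    fix x :: real assume "0 < x \<and> x < 1 \<and> B x \<noteq> 0"
    then show "D x / x^4 * x\<^sup>2 / (B x / x\<^sup>2) = u x"
      unfolding u_def by (intro alg2) auto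
  qed simp
  have g0: "g 0 = 1" by (simp add: g_def)
  have nz0: "\<forall>\<^sub>F v in at (0::real). v \<noteq> 0" by (simp add: eventually_at_filter)
  have "isCont g 0"
    unfolding isCont_def
  proof -
    have "((\<lambda>v. ln (1+v)/v) \<longlongrightarrow> 1) (at (0::real))" by (rule log_lim)
    then show "(g \<longlongrightarrow> g 0) (at 0)"
    proof (rule trE[OF _ nz0])
      fix v :: real assume "v \<noteq> 0"
      then show "ln (1+v)/v = g v" unfolding g_def by simp
    qed (rule g0[symmetric])
  qed
  then have "((\<lambda>x. g (u x)) \<longlongrightarrow> g 0) (at_right 0)"
    by (rule isCont_tendsto_compose) (rule lu)
  then have lg: "((\<lambda>x. g (u x)) \<longlongrightarrow> 1) (at_right 0)"
    by (simp only: g0)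
  have "((\<lambda>x. g (u x) * (D x / x^4) / (B x / x\<^sup>2)) \<longlongrightarrow>
          1 * (-1/(2*(real n+1)^4)) / (pi^2/6)) (at_right 0)"
    by (intro tendsto_intros lg lD lB) simp
  note lim = this
  have gu: "g v * v = ln (1 + v)" for v by (simp add: g_def)
  show ?thesis using lim
  proof (rule tr)
    show "eventually (\<lambda>x. g (u x) * (D x / x^4) / (B x / x\<^sup>2) = ln (A n x / A (Suc n) x) / x\<^sup>2) (at_right 0)"
      using evB
    proof eventually_elim
      fix x :: real assume h: "0 < x \<and> x < 1 \<and> B x \<noteq> 0"
      have "A n x / A (Suc n) x = 1 + u x"
        using h unfolding u_def B_def D_def by (simp add: diff_divide_distrib)
      then have "ln (A n x / A (Suc n) x) / x\<^sup>2 = g (u x) * u x / x\<^sup>2" by (simp add: gu)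
      also have "\<dots> = g (u x) * (D x / x^4) / (B x / x\<^sup>2)"
        using h alg1[of x "B x" "g (u x)" "D x"] by (simp only: u_def) simp
      finally show "g (u x) * (D x / x^4) / (B x / x\<^sup>2) = ln (A n x / A (Suc n) x) / x\<^sup>2" by simp
    qed
    show "1 * (-1/(2*(real n+1)^4)) / (pi^2/6) = - 1 / (2 * (real n + 1) ^ 4 * zeta_real 2)"
      by (simp add: zeta2 field_simps)
  qed
qed

end
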